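(* Let $B\ge1$, $\mathcal{E}>0$, $0<\epsilon\le1$. Run the alternate convex search algorithm described in the context with starting point $\mathbf{i}^{(0)}=(2,\dots,2)$. If $t_b^{(1)}\neq0$ for all $b\in\{0,\dots,B-1\}$, then $\lim_{k\to\infty}(\mathbf{i}^{(k)},\mathbf{t}^{(k)})=(\mathbf{i}^{(0)},\mathbf{t}^{(1)})$.
   Context: Alternate convex search (ACS): given $\mathbf{i}^{(0)}$ with $i^{(0)}_b\ge1+\epsilon$, for $k=0,1,2,\dots$: (1) with $\mathbf{i}^{(k)}$ fixed, let $\mathbf{t}^{(k+1)}$ be an optimal solution of: minimize over $\mathbf{t}\in\mathbb{R}^B$ the quantity $\sum_{b=0}^{B-1}4^b\exp(-2(i_b^{(k)}-1)t_b)$ subject to $\sum_b(i_b^{(k)})^2t_b\le\mathcal{E}$, $t_b\ge0$; (2) with $\mathbf{t}^{(k+1)}$ fixed, let $\mathbf{i}^{(k+1)}$ be an optimal solution of: minimize over $\mathbf{i}\in\mathbb{R}^B$ the quantity $\sum_b4^b\exp(-2(i_b-1)t_b^{(k+1)})$ subject to $\sum_bi_b^2t_b^{(k+1)}\le\mathcal{E}$, $i_b\ge1+\epsilon$. *)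

theory Defs
  imports Complex_Main
begin

text \<open>Vectors in R^B are represented as functions nat => real, of which only the
  coordinates b < B are meaningful.\<close>

definition acs_obj :: "nat \<Rightarrow> (nat \<Rightarrow> real) \<Rightarrow> (nat \<Rightarrow> real) \<Rightarrow> real" where
  "acs_obj B i t = (\<Sum>b<B. (4::real) ^ b * exp (- 2 * (i b - 1) * t b))"

definition acs_energy :: "nat \<Rightarrow> (nat \<Rightarrow> real) \<Rightarrow> (nat \<Rightarrow> real) \<Rightarrow> real" where
  "acs_energy B i t = (\<Sum>b<B. (i b)^2 * t b)"

definition feasible_t :: "nat \<Rightarrow> real \<Rightarrow> (nat \<Rightarrow> real) \<Rightarrow> (nat \<Rightarrow> real) \<Rightarrow> bool" where
  "feasible_t B E i t \<longleftrightarrow> acs_energy B i t \<le> E \<and> (\<forall>b<B. t b \<ge> 0)"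

definition feasible_i :: "nat \<Rightarrow> real \<Rightarrow> real \<Rightarrow> (nat \<Rightarrow> real) \<Rightarrow> (nat \<Rightarrow> real) \<Rightarrow> bool" where
  "feasible_i B E \<epsilon> t i \<longleftrightarrow> acs_energy B i t \<le> E \<and> (\<forall>b<B. i b \<ge> 1 + \<epsilon>)"

definition optimal_t :: "nat \<Rightarrow> real \<Rightarrow> (nat \<Rightarrow> real) \<Rightarrow> (nat \<Rightarrow> real) \<Rightarrow> bool" where
  "optimal_t B E i t \<longleftrightarrow> feasible_t B E i t \<and>
     (\<forall>t'. feasible_t B E i t' \<longrightarrow> acs_obj B i t \<le> acs_obj B i t')"

definition optimal_i :: "nat \<Rightarrow> real \<Rightarrow> real \<Rightarrow> (nat \<Rightarrow> real) \<Rightarrow> (nat \<Rightarrow> real) \<Rightarrow> bool" where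
  "optimal_i B E \<epsilon> t i \<longleftrightarrow> feasible_i B E \<epsilon> t i \<and>
     (\<forall>i'. feasible_i B E \<epsilon> t i' \<longrightarrow> acs_obj B i t \<le> acs_obj B i' t)"

text \<open>A run of alternate convex search: sequences i (k) and t (k) (t 0 is unused)
  such that each step returns an optimal solution of the respective subproblem.\<close>
definition acs_run :: "nat \<Rightarrow> real \<Rightarrow> real \<Rightarrow> (nat \<Rightarrow> nat \<Rightarrow> real) \<Rightarrow> (nat \<Rightarrow> nat \<Rightarrow> real) \<Rightarrow> bool" where
  "acs_run B E \<epsilon> I T \<longleftrightarrow>
     (\<forall>k. optimal_t B E (I k) (T (Suc k)) \<and> optimal_i B E \<epsilon> (T (Suc k)) (I (Suc k)))"

end

theory Submission
  imports Defs
begin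
lemma sum_two_pt:
  fixes f g :: "'a \<Rightarrow> real"
  assumes "finite A" "j \<in> A" "k \<in> A" "j \<noteq> k" "\<forall>b\<in>A. b \<noteq> j \<longrightarrow> b \<noteq> k \<longrightarrow> f b = g b"
  shows "sum f A - f j - f k = sum g A - g j - g k"
proof -
  have k: "k \<in> A - {j}" using assms by auto
  have fA: "finite (A - {j})" using assms by auto
  have "sum f A = f j + sum f (A - {j})" by (rule sum.remove[OF assms(1) assms(2)])
  moreover have "sum f (A - {j}) = f k + sum f (A - {j} - {k})" by (rule sum.remove[OF fA k])
  moreover have "sum g A = g j + sum g (A - {j})" by (rule sum.remove[OF assms(1) assms(2)])
  moreover have "sum g (A - {j}) = g k + sum g (A - {j} - {k})" by (rule sum.remove[OF fA k])
  moreover have "sum f (A - {j} - {k}) = sum g (A - {j} - {k})"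
    using assms(5) by (intro sum.cong) auto
  ultimately show ?thesis by linarith
qed

lemma sum_one_pt:
  fixes f g :: "'a \<Rightarrow> real"
  assumes "finite A" "j \<in> A" "\<forall>b\<in>A. b \<noteq> j \<longrightarrow> f b = g b"
  shows "sum f A - f j = sum g A - g j"
proof -
  have "sum f A = f j + sum f (A - {j})" by (rule sum.remove[OF assms(1) assms(2)])
  moreover have "sum g A = g j + sum g (A - {j})" by (rule sum.remove[OF assms(1) assms(2)])
  moreover have "sum f (A - {j}) = sum g (A - {j})"
    using assms(3) by (intro sum.cong) auto
  ultimately show ?thesis by linarith
qed

lemma exp_mid_strict:
  fixes x y :: real assumes "x \<noteq> y"
  shows "exp ((x + y) / 2) < (exp x + exp y) / 2"
proof -
  define u where "u = exp (x/2)"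
  define v where "v = exp (y/2)"
  have "u \<noteq> v" using assms unfolding u_def v_def by simp
  hence "0 < (u - v)^2" by simp
  hence "u * v < (u^2 + v^2) / 2" by (simp add: power2_eq_square algebra_simps)
  moreover have "exp ((x + y) / 2) = u * v" unfolding u_def v_def
    by (simp add: exp_add[symmetric] add_divide_distrib)
  moreover have "exp x = u^2" unfolding u_def by (simp add: exp_add[symmetric] power2_eq_square)
  moreover have "exp y = v^2" unfolding v_def by (simp add: exp_add[symmetric] power2_eq_square)
  ultimately show ?thesis by simp
qed

lemma exp_mid_le:
  fixes x y :: real
  shows "exp ((x + y) / 2) \<le> (exp x + exp y) / 2"
  using exp_mid_strict[of x y] by (cases "x = y") (auto simp: less_imp_le)

lemma obj_cong:
  assumes "\<forall>b<B. i b = i' b" "\<forall>b<B. t b = t' b"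
  shows "acs_obj B i t = acs_obj B i' t'" "acs_energy B i t = acs_energy B i' t'"
  using assms unfolding acs_obj_def acs_energy_def by (auto intro!: sum.cong)

lemma opt_t_cong:
  assumes "\<forall>b<B. i b = i' b"
  shows "optimal_t B E i t = optimal_t B E i' t"
proof -
  have "\<And>t. acs_obj B i t = acs_obj B i' t" "\<And>t. acs_energy B i t = acs_energy B i' t"
    using obj_cong[OF assms] by auto
  thus ?thesis unfolding optimal_t_def feasible_t_def by simp
qed

lemma opt_i_cong:
  assumes "\<forall>b<B. t b = t' b"
  shows "optimal_i B E \<epsilon> t i = optimal_i B E \<epsilon> t' i"
proof -
  have "\<And>i. acs_obj B i t = acs_obj B i t'" "\<And>i. acs_energy B i t = acs_energy B i t'"
    using obj_cong[OF _ assms] by auto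
  thus ?thesis unfolding optimal_i_def feasible_i_def by simp
qed

lemma uniq_i:
  assumes o1: "optimal_i B E \<epsilon> t i" and o2: "optimal_i B E \<epsilon> t i0"
    and tpos: "\<forall>b<B. t b > 0" and bb: "b < B"
  shows "i b = i0 b"
proof (rule ccontr)
  assume ne: "i b \<noteq> i0 b"
  define m where "m = (\<lambda>c. (i c + i0 c) / 2)"
  have f1: "feasible_i B E \<epsilon> t i" and f2: "feasible_i B E \<epsilon> t i0"
    using o1 o2 unfolding optimal_i_def by auto
  have eq: "(acs_energy B i t + acs_energy B i0 t) / 2 = (\<Sum>c<B. ((i c)^2 * t c + (i0 c)^2 * t c) / 2)"
    unfolding acs_energy_def by (simp add: sum_divide_distrib[symmetric] sum.distrib)
  have "acs_energy B m t \<le> (acs_energy B i t + acs_energy B i0 t) / 2"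
    unfolding eq unfolding acs_energy_def
  proof (intro sum_mono)
    fix c assume "c \<in> {..<B}"
    hence tc: "t c \<ge> 0" using tpos by auto
    have "(m c)^2 \<le> ((i c)^2 + (i0 c)^2) / 2"
    proof -
      have "0 \<le> (i c - i0 c)^2" by simp
      thus ?thesis unfolding m_def by (simp add: power2_eq_square field_simps)
    qed
    from mult_right_mono[OF this tc] show "(m c)^2 * t c \<le> ((i c)^2 * t c + (i0 c)^2 * t c) / 2"
      by (simp add: field_simps)
  qed
  moreover have "\<forall>c<B. 1 + \<epsilon> \<le> m c"
  proof (intro allI impI)
    fix c assume "c < B"
    hence "1 + \<epsilon> \<le> i c" "1 + \<epsilon> \<le> i0 c" using f1 f2 by (auto simp: feasible_i_def)
    thus "1 + \<epsilon> \<le> m c" unfolding m_def by (simp add: field_simps)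
  qed
  ultimately have "feasible_i B E \<epsilon> t m" using f1 f2 unfolding feasible_i_def by auto
  hence le: "acs_obj B i0 t \<le> acs_obj B m t" using o2 unfolding optimal_i_def by auto
  have le2: "acs_obj B i t \<le> acs_obj B i0 t" using o1 f2 unfolding optimal_i_def by auto
  have eqo: "(acs_obj B i t + acs_obj B i0 t) / 2 = (\<Sum>c<B. (4 ^ c * exp (- 2 * (i c - 1) * t c) + 4 ^ c * exp (- 2 * (i0 c - 1) * t c)) / 2)"
    by (simp add: acs_obj_def sum_divide_distrib[symmetric] sum.distrib)
  have "acs_obj B m t < (acs_obj B i t + acs_obj B i0 t) / 2"
    unfolding eqo unfolding acs_obj_def
  proof (rule sum_strict_mono_ex1)
    show "\<forall>c\<in>{..<B}. 4 ^ c * exp (- 2 * (m c - 1) * t c)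
      \<le> (4 ^ c * exp (- 2 * (i c - 1) * t c) + 4 ^ c * exp (- 2 * (i0 c - 1) * t c)) / 2"
    proof
      fix c
      have "exp (- 2 * (m c - 1) * t c) = exp ((- 2 * (i c - 1) * t c + - 2 * (i0 c - 1) * t c)/2)"
        unfolding m_def by (simp add: field_simps)
      also have "\<dots> \<le> (exp (- 2 * (i c - 1) * t c) + exp (- 2 * (i0 c - 1) * t c))/2"
        by (rule exp_mid_le)
      finally have h: "exp (- 2 * (m c - 1) * t c) \<le> (exp (- 2 * (i c - 1) * t c) + exp (- 2 * (i0 c - 1) * t c))/2" .
      show "4 ^ c * exp (- 2 * (m c - 1) * t c)
      \<le> (4 ^ c * exp (- 2 * (i c - 1) * t c) + 4 ^ c * exp (- 2 * (i0 c - 1) * t c)) / 2"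
        using mult_left_mono[OF h, of "4 ^ c"] by (simp add: field_simps)
    qed
    have "exp (- 2 * (m b - 1) * t b) = exp ((- 2 * (i b - 1) * t b + - 2 * (i0 b - 1) * t b)/2)"
      unfolding m_def by (simp add: field_simps)
    also have "\<dots> < (exp (- 2 * (i b - 1) * t b) + exp (- 2 * (i0 b - 1) * t b))/2"
      using ne tpos bb by (intro exp_mid_strict) auto
    finally have h: "exp (- 2 * (m b - 1) * t b) < (exp (- 2 * (i b - 1) * t b) + exp (- 2 * (i0 b - 1) * t b))/2" .
    have "4 ^ b * exp (- 2 * (m b - 1) * t b)
      < (4 ^ b * exp (- 2 * (i b - 1) * t b) + 4 ^ b * exp (- 2 * (i0 b - 1) * t b)) / 2"
      using mult_strict_left_mono[OF h, of "4 ^ b"] by (simp add: field_simps)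
    thus "\<exists>c\<in>{..<B}. 4 ^ c * exp (- 2 * (m c - 1) * t c)
      < (4 ^ c * exp (- 2 * (i c - 1) * t c) + 4 ^ c * exp (- 2 * (i0 c - 1) * t c)) / 2"
      using bb by auto
  qed auto
  with le le2 show False by simp
qed

lemma uniq_t:
  assumes o1: "optimal_t B E i t" and o2: "optimal_t B E i t0"
    and ipos: "\<forall>b<B. i b > 1" and bb: "b < B"
  shows "t b = t0 b"
proof (rule ccontr)
  assume ne: "t b \<noteq> t0 b"
  define m where "m = (\<lambda>c. (t c + t0 c) / 2)"
  have f1: "feasible_t B E i t" and f2: "feasible_t B E i t0"
    using o1 o2 unfolding optimal_t_def by auto
  have "acs_energy B i m = (\<Sum>c<B. ((i c)^2 * t c + (i c)^2 * t0 c) / 2)"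
    unfolding acs_energy_def m_def by (intro sum.cong) (auto simp: field_simps)
  also have "\<dots> = (acs_energy B i t + acs_energy B i t0) / 2"
    unfolding acs_energy_def
    by (simp add: sum_divide_distrib[symmetric] sum.distrib)
  finally have "acs_energy B i m = (acs_energy B i t + acs_energy B i t0) / 2" .
  hence "feasible_t B E i m" using f1 f2 unfolding feasible_t_def m_def by auto
  hence le: "acs_obj B i t0 \<le> acs_obj B i m" using o2 unfolding optimal_t_def by auto
  have le2: "acs_obj B i t \<le> acs_obj B i t0" using o1 f2 unfolding optimal_t_def by auto
  have eqo: "(acs_obj B i t + acs_obj B i t0) / 2 = (\<Sum>c<B. (4 ^ c * exp (- 2 * (i c - 1) * t c) + 4 ^ c * exp (- 2 * (i c - 1) * t0 c)) / 2)"
    by (simp add: acs_obj_def sum_divide_distrib[symmetric] sum.distrib)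
  have "acs_obj B i m < (acs_obj B i t + acs_obj B i t0) / 2"
    unfolding eqo unfolding acs_obj_def
  proof (rule sum_strict_mono_ex1)
    show "\<forall>c\<in>{..<B}. 4 ^ c * exp (- 2 * (i c - 1) * m c)
      \<le> (4 ^ c * exp (- 2 * (i c - 1) * t c) + 4 ^ c * exp (- 2 * (i c - 1) * t0 c)) / 2"
    proof
      fix c
      have "exp (- 2 * (i c - 1) * m c) = exp ((- 2 * (i c - 1) * t c + - 2 * (i c - 1) * t0 c)/2)"
        unfolding m_def by (simp add: field_simps)
      also have "\<dots> \<le> (exp (- 2 * (i c - 1) * t c) + exp (- 2 * (i c - 1) * t0 c))/2"
        by (rule exp_mid_le)
      finally have h: "exp (- 2 * (i c - 1) * m c) \<le> (exp (- 2 * (i c - 1) * t c) + exp (- 2 * (i c - 1) * t0 c))/2" .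
      show "4 ^ c * exp (- 2 * (i c - 1) * m c)
      \<le> (4 ^ c * exp (- 2 * (i c - 1) * t c) + 4 ^ c * exp (- 2 * (i c - 1) * t0 c)) / 2"
        using mult_left_mono[OF h, of "4 ^ c"] by (simp add: field_simps)
    qed
    have "exp (- 2 * (i b - 1) * m b) = exp ((- 2 * (i b - 1) * t b + - 2 * (i b - 1) * t0 b)/2)"
      unfolding m_def by (simp add: field_simps)
    also have "\<dots> < (exp (- 2 * (i b - 1) * t b) + exp (- 2 * (i b - 1) * t0 b))/2"
      using ne ipos bb by (intro exp_mid_strict) auto
    finally have h: "exp (- 2 * (i b - 1) * m b) < (exp (- 2 * (i b - 1) * t b) + exp (- 2 * (i b - 1) * t0 b))/2" .
    have "4 ^ b * exp (- 2 * (i b - 1) * m b)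
      < (4 ^ b * exp (- 2 * (i b - 1) * t b) + 4 ^ b * exp (- 2 * (i b - 1) * t0 b)) / 2"
      using mult_strict_left_mono[OF h, of "4 ^ b"] by (simp add: field_simps)
    thus "\<exists>c\<in>{..<B}. 4 ^ c * exp (- 2 * (i c - 1) * m c)
      < (4 ^ c * exp (- 2 * (i c - 1) * t c) + 4 ^ c * exp (- 2 * (i c - 1) * t0 c)) / 2"
      using bb by auto
  qed auto
  with le le2 show False by simp
qed

lemma tight:
  assumes opt: "optimal_t B E i t" and i2: "\<forall>b<B. i b = 2" and B: "0 < B"
  shows "acs_energy B i t = E"
proof (rule ccontr)
  assume ne: "acs_energy B i t \<noteq> E"
  have fe: "feasible_t B E i t" using opt by (simp add: optimal_t_def)
  hence lt: "acs_energy B i t < E" using ne by (simp add: feasible_t_def)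
  define s where "s = (E - acs_energy B i t) / 4"
  have s: "s > 0" using lt by (simp add: s_def)
  define t' where "t' = t(0 := t 0 + s)"
  have i0: "i 0 = 2" using i2 B by auto
  have "acs_energy B i t' - (i 0)^2 * t' 0 = acs_energy B i t - (i 0)^2 * t 0"
    unfolding acs_energy_def using B by (intro sum_one_pt) (auto simp: t'_def)
  moreover have "(i 0)^2 * t' 0 - (i 0)^2 * t 0 = 4 * s" by (simp add: t'_def i0 algebra_simps)
  ultimately have "acs_energy B i t' = acs_energy B i t + 4 * s" by linarith
  hence en: "acs_energy B i t' = E" by (simp add: s_def field_simps)
  have "\<forall>b<B. t' b \<ge> 0" using fe s by (auto simp: feasible_t_def t'_def)
  hence "feasible_t B E i t'" using en by (simp add: feasible_t_def)
  hence le: "acs_obj B i t \<le> acs_obj B i t'" using opt by (simp add: optimal_t_def)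
  have "acs_obj B i t' - 4^0 * exp (- 2 * (i 0 - 1) * t' 0) = acs_obj B i t - 4^0 * exp (- 2 * (i 0 - 1) * t 0)"
    unfolding acs_obj_def using B by (intro sum_one_pt) (auto simp: t'_def)
  moreover have "(4::real)^0 * exp (- 2 * (i 0 - 1) * t' 0) < 4^0 * exp (- 2 * (i 0 - 1) * t 0)"
    using i0 s by (simp add: t'_def)
  ultimately show False using le by linarith
qed

lemma marg_le:
  assumes opt: "optimal_t B E i t" and i2: "\<forall>b<B. i b = 2"
    and tk: "t k > 0" and j: "j < B" and k: "k < B"
  shows "4^j * exp (- 2 * t j) \<le> (4::real)^k * exp (- 2 * t k)"
proof (cases "j = k")
  case True thus ?thesis by simp
next
  case jk: False
  show ?thesis
  proof (rule ccontr)
    assume "\<not> ?thesis"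
    hence gt: "4^j * exp (- 2 * t j) > (4::real)^k * exp (- 2 * t k)" by simp
    define g where "g s = 4^j * exp (- 2 * (t j + s)) + (4::real)^k * exp (- 2 * (t k - s))" for s
    have "DERIV g 0 :> 4^j * exp (- 2 * t j) * (-2) + 4^k * exp (- 2 * t k) * 2"
      unfolding g_def by (auto intro!: derivative_eq_intros)
    moreover have "4^j * exp (- 2 * t j) * (-2) + 4^k * exp (- 2 * t k) * 2 < (0::real)"
      using gt by simp
    ultimately obtain d where d: "d > 0" "\<forall>h>0. h < d \<longrightarrow> g 0 > g (0 + h)"
      using DERIV_neg_dec_right by blast
    define h where "h = min (d/2) (t k)"
    have h: "h > 0" "h < d" "h \<le> t k" using d tk by (auto simp: h_def)
    hence gh: "g h < g 0" using d by auto
    define t' where "t' = t(j := t j + h, k := t k - h)"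
    have fe: "feasible_t B E i t" using opt by (simp add: optimal_t_def)
    have "acs_energy B i t' - (i j)^2 * t' j - (i k)^2 * t' k = acs_energy B i t - (i j)^2 * t j - (i k)^2 * t k"
      unfolding acs_energy_def using j k jk by (intro sum_two_pt) (auto simp: t'_def)
    hence en: "acs_energy B i t' = acs_energy B i t" using i2 j k jk by (simp add: t'_def)
    have "\<forall>b<B. t' b \<ge> 0" using fe h by (auto simp: feasible_t_def t'_def)
    hence "feasible_t B E i t'" using en fe by (simp add: feasible_t_def)
    hence le: "acs_obj B i t \<le> acs_obj B i t'" using opt by (simp add: optimal_t_def)
    have "acs_obj B i t' - 4^j * exp (- 2 * (i j - 1) * t' j) - 4^k * exp (- 2 * (i k - 1) * t' k)
      = acs_obj B i t - 4^j * exp (- 2 * (i j - 1) * t j) - 4^k * exp (- 2 * (i k - 1) * t k)"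
      unfolding acs_obj_def using j k jk by (intro sum_two_pt) (auto simp: t'_def)
    moreover have "4^j * exp (- 2 * (i j - 1) * t' j) + 4^k * exp (- 2 * (i k - 1) * t' k) = g h"
      using i2 j k jk by (simp add: t'_def g_def)
    moreover have "4^j * exp (- 2 * (i j - 1) * t j) + 4^k * exp (- 2 * (i k - 1) * t k) = g 0"
      using i2 j k jk by (simp add: g_def)
    ultimately show False using le gh by linarith
  qed
qed

lemma i0_opt:
  assumes opt: "optimal_t B E i t" and i2: "\<forall>b<B. i b = 2" and B: "0 < B"
    and tpos: "\<forall>b<B. t b > 0" and eps: "\<epsilon> \<le> 1"
  shows "optimal_i B E \<epsilon> t i"
proof -
  have fe: "feasible_t B E i t" using opt by (simp add: optimal_t_def)
  have en: "acs_energy B i t = E" using tight[OF opt i2 B] .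
  define c where "c = exp (- 2 * t 0)"
  have cpos: "c > 0" by (simp add: c_def)
  have ceq: "(4::real)^b * exp (- 2 * t b) = c" if "b < B" for b
    using marg_le[OF opt i2, of 0 b] marg_le[OF opt i2, of b 0] tpos that B
    by (simp add: c_def)
  have fi: "feasible_i B E \<epsilon> t i" using en i2 eps by (simp add: feasible_i_def)
  show ?thesis unfolding optimal_i_def
  proof (intro conjI allI impI fi)
    fix i' assume fi': "feasible_i B E \<epsilon> t i'"
    have trm: "4^b * exp (- 2 * (i' b - 1) * t b) \<ge> 4^b * exp (- 2 * (i b - 1) * t b) - 2 * c * ((i' b - 2) * t b)"
      if b: "b < B" for b
    proof -
      have "exp (- 2 * (i' b - 1) * t b) = exp (- 2 * t b) * exp (- 2 * (i' b - 2) * t b)"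
        by (simp add: exp_add[symmetric] algebra_simps)
      also have "\<dots> \<ge> exp (- 2 * t b) * (1 + - 2 * (i' b - 2) * t b)"
        by (intro mult_left_mono exp_ge_add_one_self) auto
      finally have "(4::real)^b * exp (- 2 * (i' b - 1) * t b) \<ge> 4^b * (exp (- 2 * t b) * (1 + - 2 * (i' b - 2) * t b))"
        by (intro mult_left_mono) auto
      also have "4^b * (exp (- 2 * t b) * (1 + - 2 * (i' b - 2) * t b)) = c - 2 * c * ((i' b - 2) * t b)"
        using ceq[OF b] by (simp add: algebra_simps)
      finally show ?thesis using i2 b ceq[OF b] by simp
    qed
    have sq: "4 * ((i' b - 2) * t b) \<le> (i' b)^2 * t b - (i b)^2 * t b" if b: "b < B" for b
    proof -
      have "0 \<le> (i' b - 2)^2 * t b" using tpos b by (simp add: less_imp_le)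
      thus ?thesis using i2 b by (simp add: power2_eq_square algebra_simps)
    qed
    have "4 * (\<Sum>b<B. (i' b - 2) * t b) \<le> acs_energy B i' t - acs_energy B i t"
      unfolding acs_energy_def sum_distrib_left sum_subtractf[symmetric]
      by (intro sum_mono) (use sq in auto)
    also have "\<dots> \<le> 0" using fi' en by (simp add: feasible_i_def)
    finally have s0: "(\<Sum>b<B. (i' b - 2) * t b) \<le> 0" by simp
    have "acs_obj B i t - 2 * c * (\<Sum>b<B. (i' b - 2) * t b) \<le> acs_obj B i' t"
      unfolding acs_obj_def sum_distrib_left sum_subtractf[symmetric]
      by (intro sum_mono) (use trm in auto)
    moreover have "0 \<le> - 2 * c * (\<Sum>b<B. (i' b - 2) * t b)"
      using s0 cpos by (simp add: mult_nonpos_nonneg mult_le_0_iff)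
    ultimately show "acs_obj B i t \<le> acs_obj B i' t" by linarith
  qed
qed

theorem corollary1:
  fixes B :: nat and E \<epsilon> :: real
    and I T :: "nat \<Rightarrow> nat \<Rightarrow> real"
  assumes "B \<ge> 1" and "E > 0" and "0 < \<epsilon>" and "\<epsilon> \<le> 1"
    and "\<forall>b<B. I 0 b = 2"
    and "acs_run B E \<epsilon> I T"
    and "\<forall>b<B. T 1 b \<noteq> 0"
  shows "\<forall>b<B. (\<lambda>k. I k b) \<longlonglongrightarrow> I 0 b \<and> (\<lambda>k. T k b) \<longlonglongrightarrow> T 1 b"
proof -
  have B: "0 < B" using assms(1) by simp
  have run: "\<And>k. optimal_t B E (I k) (T (Suc k))" "\<And>k. optimal_i B E \<epsilon> (T (Suc k)) (I (Suc k))"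
    using assms(6) by (auto simp: acs_run_def)
  have o1: "optimal_t B E (I 0) (T 1)" using run(1)[of 0] by simp
  have tpos: "\<forall>b<B. T 1 b > 0"
  proof (intro allI impI)
    fix b assume b: "b < B"
    have "T 1 b \<ge> 0" using o1 b by (simp add: optimal_t_def feasible_t_def)
    moreover have "T 1 b \<noteq> 0" using assms(7) b by simp
    ultimately show "T 1 b > 0" by simp
  qed
  have oi0: "optimal_i B E \<epsilon> (T 1) (I 0)"
    by (rule i0_opt[OF o1 assms(5) B tpos assms(4)])
  have ipos: "\<forall>b<B. I 0 b > 1" using assms(5) by simp
  have main: "(\<forall>b<B. I k b = I 0 b) \<and> (\<forall>b<B. T (Suc k) b = T 1 b)" for k
  proof (induction k)
    case 0 show ?case by simp
  next
    case (Suc k)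
    have "optimal_i B E \<epsilon> (T (Suc k)) (I (Suc k)) = optimal_i B E \<epsilon> (T 1) (I (Suc k))"
      by (rule opt_i_cong) (use Suc.IH in blast)
    hence oi: "optimal_i B E \<epsilon> (T 1) (I (Suc k))" using run(2)[of k] by (rule iffD1)
    have ei: "\<forall>b<B. I (Suc k) b = I 0 b"
    proof (intro allI impI)
      fix b assume "b < B" thus "I (Suc k) b = I 0 b" by (rule uniq_i[OF oi oi0 tpos])
    qed
    have "optimal_t B E (I (Suc k)) (T (Suc (Suc k))) = optimal_t B E (I 0) (T (Suc (Suc k)))"
      by (rule opt_t_cong) (use ei in blast)
    hence ot: "optimal_t B E (I 0) (T (Suc (Suc k)))" using run(1)[of "Suc k"] by (rule iffD1)
    have "\<forall>b<B. T (Suc (Suc k)) b = T 1 b"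
    proof (intro allI impI)
      fix b assume "b < B" thus "T (Suc (Suc k)) b = T 1 b" by (rule uniq_t[OF ot o1 ipos])
    qed
    with ei show ?case by simp
  qed
  show ?thesis
  proof (intro allI impI conjI)
    fix b assume b: "b < B"
    have "\<And>k. I k b = I 0 b" using main b by blast
    hence "(\<lambda>k. I k b) = (\<lambda>k. I 0 b)" by (rule ext)
    thus "(\<lambda>k. I k b) \<longlonglongrightarrow> I 0 b" by (simp only: tendsto_const)
    have "\<And>k. T (Suc k) b = T 1 b" using main b by blast
    hence "(\<lambda>k. T (Suc k) b) = (\<lambda>k. T 1 b)" by (rule ext)
    hence "(\<lambda>k. T (Suc k) b) \<longlonglongrightarrow> T 1 b" by (simp only: tendsto_const)
    thus "(\<lambda>k. T k b) \<longlonglongrightarrow> T 1 b" by (rule LIMSEQ_imp_Suc)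
  qed
qed

end
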